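(* Let $X,Y\in\mathcal{H}$ be random variables, $\mathbb{E}$ a sub-linear expectation and $(\mathbb{V},v)$ the pair of capacities generated by $\mathbb{E}$. If $X$ is independent of $Y$ under $\mathbb{E}$, then for all Borel sets $D,G\subset\mathbb{R}$, $$\mathbb{V}(X\in D,Y\in G)=\mathbb{V}(X\in D)\,\mathbb{V}(Y\in G)\quad\text{and}\quad v(X\in D,Y\in G)=v(X\in D)\,v(Y\in G),$$ i.e. $X$ is pairwise independent of $Y$ under both $\mathbb{V}$ and $v$.
   Context: Let $(\Omega,\mathcal{F})$ be a measurable space, $\mathcal{P}$ a nonempty set of probability measures on it, and $\mathcal{H}$ a set of real random variables on $(\Omega,\mathcal{F})$ containing indicator-type functions of the random variables considered. The sub-linear expectation is $\mathbb{E}[\xi]:=\sup_{P\in\mathcal{P}}E_P[\xi]$; it generates the capacities $\mathbb{V}(A):=\mathbb{E}[I_A]=\sup_{P\in\mathcal{P}}P(A)$ and $v(A):=-\mathbb{E}[-I_A]=\inf_{P\in\mathcal{P}}P(A)$. Independence (Peng): $X$ is independent of $Y$ under $\mathbb{E}$ if for every measurable $\varphi$ on $\mathbb{R}^2$ (with relevant quantities in $\mathcal{H}$), $\mathbb{E}[\varphi(Y,X)]=\mathbb{E}[\overline{\varphi}(Y)]$ with $\overline{\varphi}(y):=\mathbb{E}[\varphi(y,X)]$. *)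

theory Defs
  imports "HOL-Probability.Probability"
begin

definition sublin_exp :: "'a measure set \<Rightarrow> ('a \<Rightarrow> real) \<Rightarrow> real" where
  "sublin_exp \<P> \<xi> = (SUP P\<in>\<P>. integral\<^sup>L P \<xi>)"

definition upper_cap :: "'a measure set \<Rightarrow> 'a set \<Rightarrow> real" where
  "upper_cap \<P> A = sublin_exp \<P> (indicator A)"

definition lower_cap :: "'a measure set \<Rightarrow> 'a set \<Rightarrow> real" where
  "lower_cap \<P> A = - sublin_exp \<P> (\<lambda>\<omega>. - indicator A \<omega>)"

text \<open>Peng independence: X is independent of Y under E. For every Borel
  \<phi> on R^2 such that the relevant quantities lie in H:
  E[\<phi>(Y,X)] = E[\<phi>bar(Y)] where \<phi>bar(y) = E[\<phi>(y,X)].\<close>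
definition peng_indep ::
  "'a measure set \<Rightarrow> ('a \<Rightarrow> real) set \<Rightarrow> ('a \<Rightarrow> real) \<Rightarrow> ('a \<Rightarrow> real) \<Rightarrow> bool" where
  "peng_indep \<P> \<H> X Y \<longleftrightarrow>
     (\<forall>\<phi> :: real \<times> real \<Rightarrow> real. \<phi> \<in> borel_measurable borel \<longrightarrow>
        (\<lambda>\<omega>. \<phi> (Y \<omega>, X \<omega>)) \<in> \<H> \<longrightarrow>
        (\<forall>y. (\<lambda>\<omega>. \<phi> (y, X \<omega>)) \<in> \<H>) \<longrightarrow>
        (\<lambda>\<omega>. sublin_exp \<P> (\<lambda>\<omega>'. \<phi> (Y \<omega>, X \<omega>'))) \<in> \<H> \<longrightarrow>
        sublin_exp \<P> (\<lambda>\<omega>. \<phi> (Y \<omega>, X \<omega>)) =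
        sublin_exp \<P> (\<lambda>\<omega>. sublin_exp \<P> (\<lambda>\<omega>'. \<phi> (Y \<omega>, X \<omega>'))))"

end

theory Submission
  imports Defs
begin

lemma sup_scale:
  fixes f :: "'b \<Rightarrow> real"
  assumes "A \<noteq> {}" "bdd_above (f ` A)" "c \<ge> 0"
  shows "(SUP x\<in>A. c * f x) = c * (SUP x\<in>A. f x)"
proof (cases "c = 0")
  case True then show ?thesis using assms by simp
next
  case False
  have m: "mono (\<lambda>x::real. c * x)" using assms(3) by (simp add: mono_def mult_left_mono)
  have "c * Sup (f ` A) = (SUP s\<in>f ` A. c * s)"
    by (rule continuous_at_Sup_mono[OF m]) (auto intro!: continuous_intros simp: assms)
  then show ?thesis by (simp add: image_image)
qed

lemma sublin_cong:
  assumes "\<And>P \<omega>. P \<in> \<P> \<Longrightarrow> \<omega> \<in> space P \<Longrightarrow> f \<omega> = g \<omega>"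
  shows "sublin_exp \<P> f = sublin_exp \<P> g"
  unfolding sublin_exp_def
  by (rule SUP_cong[OF refl], rule Bochner_Integration.integral_cong[OF refl]) (simp add: assms)

lemma ind_snd: "A \<in> sets borel \<Longrightarrow> (\<lambda>p::real\<times>real. indicator A (snd p) :: real) \<in> borel_measurable borel"
  by (rule measurable_compose[OF measurable_snd[of "borel::real measure" "borel::real measure", unfolded borel_prod] borel_measurable_indicator])

lemma ind_fst: "A \<in> sets borel \<Longrightarrow> (\<lambda>p::real\<times>real. indicator A (fst p) :: real) \<in> borel_measurable borel"
  by (rule measurable_compose[OF measurable_fst[of "borel::real measure" "borel::real measure", unfolded borel_prod] borel_measurable_indicator])

theorem lemma1:
  fixes M :: "'a measure" and \<P> :: "'a measure set"
    and \<H> :: "('a \<Rightarrow> real) set" and X Y :: "'a \<Rightarrow> real"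
  assumes P_nonempty: "\<P> \<noteq> {}"
    and P_prob: "\<And>P. P \<in> \<P> \<Longrightarrow> prob_space P \<and> sets P = sets M"
    and H_meas: "\<H> \<subseteq> borel_measurable M"
    and H_integrable: "\<And>\<xi> P. \<xi> \<in> \<H> \<Longrightarrow> P \<in> \<P> \<Longrightarrow> integrable P \<xi>"
    and H_bdd: "\<And>\<xi>. \<xi> \<in> \<H> \<Longrightarrow> bdd_above ((\<lambda>P. integral\<^sup>L P \<xi>) ` \<P>)"
    and H_scale: "\<And>c \<xi>. \<xi> \<in> \<H> \<Longrightarrow> (\<lambda>\<omega>. c * \<xi> \<omega>) \<in> \<H>"
    and H_ind: "\<And>D G. D \<in> sets borel \<Longrightarrow> G \<in> sets borel \<Longrightarrow>
        (\<lambda>\<omega>. indicator D (X \<omega>) * indicator G (Y \<omega>)) \<in> \<H> \<and>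
        (\<lambda>\<omega>. indicator D (X \<omega>)) \<in> \<H> \<and> (\<lambda>\<omega>. indicator G (Y \<omega>)) \<in> \<H>"
    and X_H: "X \<in> \<H>" and Y_H: "Y \<in> \<H>"
    and indep: "peng_indep \<P> \<H> X Y"
    and D: "D \<in> sets borel" and G: "G \<in> sets borel"
  shows "upper_cap \<P> {\<omega>\<in>space M. X \<omega> \<in> D \<and> Y \<omega> \<in> G}
           = upper_cap \<P> {\<omega>\<in>space M. X \<omega> \<in> D} * upper_cap \<P> {\<omega>\<in>space M. Y \<omega> \<in> G}
       \<and> lower_cap \<P> {\<omega>\<in>space M. X \<omega> \<in> D \<and> Y \<omega> \<in> G}
           = lower_cap \<P> {\<omega>\<in>space M. X \<omega> \<in> D} * lower_cap \<P> {\<omega>\<in>space M. Y \<omega> \<in> G}"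
proof -
  have sp: "\<And>P. P \<in> \<P> \<Longrightarrow> space P = space M"
    using P_prob sets_eq_imp_space_eq by blast
  have scale: "sublin_exp \<P> (\<lambda>\<omega>. c * \<xi> \<omega>) = c * sublin_exp \<P> \<xi>"
    if "\<xi> \<in> \<H>" "c \<ge> 0" for c \<xi>
    unfolding sublin_exp_def using sup_scale[OF P_nonempty H_bdd[OF that(1)] that(2)] by simp
  have nonneg: "sublin_exp \<P> \<xi> \<ge> 0" if "\<xi> \<in> \<H>" "\<And>\<omega>. \<xi> \<omega> \<ge> 0" for \<xi>
  proof -
    obtain P where P: "P \<in> \<P>" using P_nonempty by blast
    have "0 \<le> integral\<^sup>L P \<xi>" using that by simp
    also have "\<dots> \<le> sublin_exp \<P> \<xi>" unfolding sublin_exp_def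
      by (rule cSUP_upper[OF P H_bdd[OF that(1)]])
    finally show ?thesis .
  qed
  define iD where "iD = (\<lambda>\<omega>. indicator D (X \<omega>) :: real)"
  define iG where "iG = (\<lambda>\<omega>. indicator G (Y \<omega>) :: real)"
  have iD: "iD \<in> \<H>" and iG: "iG \<in> \<H>" and iDG: "(\<lambda>\<omega>. iD \<omega> * iG \<omega>) \<in> \<H>"
    using H_ind[OF D G] unfolding iD_def iG_def by auto
  have mD: "(\<lambda>\<omega>. - iD \<omega>) \<in> \<H>" and mG: "(\<lambda>\<omega>. - iG \<omega>) \<in> \<H>"
    using H_scale[OF iD, of "-1"] H_scale[OF iG, of "-1"] by auto
  have e1: "upper_cap \<P> {\<omega>\<in>space M. X \<omega> \<in> D \<and> Y \<omega> \<in> G} = sublin_exp \<P> (\<lambda>\<omega>. iD \<omega> * iG \<omega>)"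
    unfolding upper_cap_def iD_def iG_def by (rule sublin_cong) (auto simp: sp indicator_def)
  have e2: "upper_cap \<P> {\<omega>\<in>space M. X \<omega> \<in> D} = sublin_exp \<P> iD"
    unfolding upper_cap_def iD_def by (rule sublin_cong) (auto simp: sp indicator_def)
  have e3: "upper_cap \<P> {\<omega>\<in>space M. Y \<omega> \<in> G} = sublin_exp \<P> iG"
    unfolding upper_cap_def iG_def by (rule sublin_cong) (auto simp: sp indicator_def)
  have f1: "lower_cap \<P> {\<omega>\<in>space M. X \<omega> \<in> D \<and> Y \<omega> \<in> G} = - sublin_exp \<P> (\<lambda>\<omega>. - (iD \<omega> * iG \<omega>))"
    unfolding lower_cap_def iD_def iG_def by (rule arg_cong[where f=uminus], rule sublin_cong) (auto simp: sp indicator_def)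
  have f2: "lower_cap \<P> {\<omega>\<in>space M. X \<omega> \<in> D} = - sublin_exp \<P> (\<lambda>\<omega>. - iD \<omega>)"
    unfolding lower_cap_def iD_def by (rule arg_cong[where f=uminus], rule sublin_cong) (auto simp: sp indicator_def)
  have f3: "lower_cap \<P> {\<omega>\<in>space M. Y \<omega> \<in> G} = - sublin_exp \<P> (\<lambda>\<omega>. - iG \<omega>)"
    unfolding lower_cap_def iG_def by (rule arg_cong[where f=uminus], rule sublin_cong) (auto simp: sp indicator_def)
  have VD: "sublin_exp \<P> iD \<ge> 0" by (rule nonneg[OF iD]) (simp add: iD_def)
  have vD: "- sublin_exp \<P> (\<lambda>\<omega>. - iD \<omega>) \<ge> 0"
  proof -
    have "sublin_exp \<P> (\<lambda>\<omega>. - iD \<omega>) \<le> 0"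
      unfolding sublin_exp_def
    proof (rule cSUP_least[OF P_nonempty])
      fix P assume "P \<in> \<P>"
      show "integral\<^sup>L P (\<lambda>\<omega>. - iD \<omega>) \<le> 0" by (simp add: iD_def)
    qed
    then show ?thesis by simp
  qed
  have borel_phi: "(\<lambda>p::real\<times>real. indicator D (snd p) * indicator G (fst p) :: real) \<in> borel_measurable borel"
    using D G by (intro borel_measurable_times borel_measurable_uminus ind_snd ind_fst)
  have inner1: "\<And>\<omega>. sublin_exp \<P> (\<lambda>\<omega>'. indicator D (X \<omega>') * indicator G (Y \<omega>) :: real) = sublin_exp \<P> iD * iG \<omega>"
  proof -
    fix \<omega>
    have "sublin_exp \<P> (\<lambda>\<omega>'. indicator D (X \<omega>') * indicator G (Y \<omega>) :: real) = sublin_exp \<P> (\<lambda>\<omega>'. iG \<omega> * iD \<omega>')"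
      by (simp add: iD_def iG_def mult.commute)
    also have "\<dots> = iG \<omega> * sublin_exp \<P> iD" by (rule scale[OF iD]) (simp add: iG_def)
    finally show "?thesis \<omega>" by simp
  qed
  have U: "sublin_exp \<P> (\<lambda>\<omega>. indicator D (X \<omega>) * indicator G (Y \<omega>) :: real)
      = sublin_exp \<P> (\<lambda>\<omega>. sublin_exp \<P> (\<lambda>\<omega>'. indicator D (X \<omega>') * indicator G (Y \<omega>) :: real))"
    using indep[unfolded peng_indep_def, rule_format, OF borel_phi]
      iDG H_scale[OF iD] H_scale[OF iG, of "sublin_exp \<P> iD"]
    by (simp add: iD_def iG_def inner1 mult.commute)
  have upper: "sublin_exp \<P> (\<lambda>\<omega>. iD \<omega> * iG \<omega>) = sublin_exp \<P> iD * sublin_exp \<P> iG"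
    using U scale[OF iG VD] unfolding inner1 iD_def iG_def by simp
  have borel_psi: "(\<lambda>p::real\<times>real. - (indicator D (snd p) * indicator G (fst p)) :: real) \<in> borel_measurable borel"
    using D G by (intro borel_measurable_times borel_measurable_uminus ind_snd ind_fst)
  have inner2: "\<And>\<omega>. sublin_exp \<P> (\<lambda>\<omega>'. - (indicator D (X \<omega>') * indicator G (Y \<omega>)) :: real) = sublin_exp \<P> (\<lambda>\<omega>. - iD \<omega>) * iG \<omega>"
  proof -
    fix \<omega>
    have "sublin_exp \<P> (\<lambda>\<omega>'. - (indicator D (X \<omega>') * indicator G (Y \<omega>)) :: real) = sublin_exp \<P> (\<lambda>\<omega>'. iG \<omega> * - iD \<omega>')"
      by (simp add: iD_def iG_def mult.commute)
    also have "\<dots> = iG \<omega> * sublin_exp \<P> (\<lambda>\<omega>. - iD \<omega>)" by (rule scale[OF mD]) (simp add: iG_def)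
    finally show "?thesis \<omega>" by simp
  qed
  have L: "sublin_exp \<P> (\<lambda>\<omega>. - (indicator D (X \<omega>) * indicator G (Y \<omega>)) :: real)
      = sublin_exp \<P> (\<lambda>\<omega>. sublin_exp \<P> (\<lambda>\<omega>'. - (indicator D (X \<omega>') * indicator G (Y \<omega>)) :: real))"
    using indep[unfolded peng_indep_def, rule_format, OF borel_psi]
      H_scale[OF iDG, of "-1"] H_scale[OF mD] H_scale[OF iG, of "sublin_exp \<P> (\<lambda>\<omega>. - iD \<omega>)"]
    by (simp add: iD_def iG_def inner2 mult.commute)
  have "sublin_exp \<P> (\<lambda>\<omega>. sublin_exp \<P> (\<lambda>\<omega>. - iD \<omega>) * iG \<omega>)
      = sublin_exp \<P> (\<lambda>\<omega>. (- sublin_exp \<P> (\<lambda>\<omega>. - iD \<omega>)) * - iG \<omega>)" by simp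
  also have "\<dots> = (- sublin_exp \<P> (\<lambda>\<omega>. - iD \<omega>)) * sublin_exp \<P> (\<lambda>\<omega>. - iG \<omega>)"
    by (rule scale[OF mG vD])
  finally have lower: "sublin_exp \<P> (\<lambda>\<omega>. - (iD \<omega> * iG \<omega>)) = (- sublin_exp \<P> (\<lambda>\<omega>. - iD \<omega>)) * sublin_exp \<P> (\<lambda>\<omega>. - iG \<omega>)"
    using L unfolding inner2 by (simp add: iD_def iG_def)
  show ?thesis using e1 e2 e3 f1 f2 f3 upper lower by simp
qed

end
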